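(* Let $n\geq 1$ be an integer, $p>1$ real, $q=pe^{2\pi i/n}$, and let $A\subset\mathbb R$ be a finite nonempty alphabet. Let $\Lambda_{n,p,A}=\{\sum_{j=1}^\infty x_jq^{-j}\mid x_j\in A\}$. For $h=1,\dots,n$ define $$\underline K(h)=\{k\in\{0,\dots,n-1\}\mid (k-h+1)\bmod n\leq \lfloor n/2\rfloor-1\},\qquad \overline K(h)=\{k\in\{0,\dots,n-1\}\mid (k-h+1)\bmod n\leq \lceil n/2\rceil-1\},$$ where $(k-h+1)\bmod n$ denotes the representative in $\{0,\dots,n-1\}$, and set $$\mathbf v_{2h-1}=\sum_{k\in\underline K(h)}q^k,\qquad \mathbf v_{2h}=\sum_{k\in\overline K(h)}q^k .$$ Then $$\mathrm{conv}(\Lambda_{n,p,A})=\frac{\max A-\min A}{p^n-1}\,\mathrm{conv}\{\mathbf v_h\mid h=1,\dots,2n\}+\frac{1}{p^n-1}\sum_{k=0}^{n-1}(\min A)\,q^k .$$ Moreover, if $n$ is even, then $$\mathrm{conv}(\Lambda_{n,p,A})=\frac{\max A-\min A}{p^n-1}\,\mathrm{conv}\{\mathbf v_{2h}\mid h=1,\dots,n\}+\frac{1}{p^n-1}\sum_{k=0}^{n-1}(\min A)\,q^k .$$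
   Context: For a set $Y\subset\mathbb C$, $c\in\mathbb R$ and $d\in\mathbb C$, $cY+d=\{cy+d\mid y\in Y\}$. $\mathrm{conv}$ denotes convex hull in $\mathbb C\cong\mathbb R^2$. *)

theory Defs
  imports "HOL-Analysis.Analysis"
begin

definition qbase :: "nat \<Rightarrow> real \<Rightarrow> complex" where
  "qbase n p = complex_of_real p * cis (2 * pi / real n)"

text \<open>Lambda_{n,p,A}: all sums sum_{j>=1} x_j q^{-j} with digits x_j in A
  (digit x (Suc j) is the coefficient of q^{-(j+1)}).\<close>
definition Lam :: "nat \<Rightarrow> real \<Rightarrow> real set \<Rightarrow> complex set" where
  "Lam n p A = {(\<Sum>j. complex_of_real (x (Suc j)) / (qbase n p) ^ (Suc j)) | x.
                  \<forall>j\<ge>1. x j \<in> A}"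

definition Klow :: "nat \<Rightarrow> nat \<Rightarrow> nat set" where
  "Klow n h = {k \<in> {0..<n}. (int k - int h + 1) mod int n \<le> \<lfloor>real n / 2\<rfloor> - 1}"

definition Kup :: "nat \<Rightarrow> nat \<Rightarrow> nat set" where
  "Kup n h = {k \<in> {0..<n}. (int k - int h + 1) mod int n \<le> \<lceil>real n / 2\<rceil> - 1}"

definition vv :: "nat \<Rightarrow> real \<Rightarrow> nat \<Rightarrow> complex" where
  "vv n p m = (if odd m then (\<Sum>k\<in>Klow n ((m + 1) div 2). (qbase n p) ^ k)
               else (\<Sum>k\<in>Kup n (m div 2). (qbase n p) ^ k))"

end

theory Submission
  imports Defs
begin


lemma split_sum:
  fixes s :: "nat \<Rightarrow> 'a::{real_normed_field,banach}"
  assumes "summable s" "\<And>i. s (i+n) = s i / P" "P \<noteq> 1" "P \<noteq> 0"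
  shows "suminf s = P/(P-1) * (\<Sum>i<n. s i)"
proof -
  have "suminf s = (\<Sum>i. s(i+n)) + sum s {..<n}" using suminf_split_initial_segment[OF assms(1)] .
  also have "(\<Sum>i. s(i+n)) = (\<Sum>i. s i / P)" using assms(2) by simp
  also have "\<dots> = suminf s / P" using suminf_divide[OF assms(1)] by simp
  finally have e: "suminf s = suminf s / P + sum s {..<n}" .
  have "P - 1 \<noteq> 0" using assms(3) by simp
  then show ?thesis using e assms(4) by (simp add: field_simps)
qed

lemma q_pow:
  assumes "n \<ge> 1"
  shows "qbase n p ^ k = complex_of_real (p ^ k) * cis (2 * pi * real k / real n)"
proof -
  have h: "cis (2 * pi / real n) ^ k = cis (2 * pi * real k / real n)"
    unfolding Complex.DeMoivre by (simp add: field_simps)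
  show ?thesis unfolding qbase_def power_mult_distrib h of_real_power ..
qed

lemma q_pow_n:
  assumes "n \<ge> 1"
  shows "qbase n p ^ n = complex_of_real (p ^ n)"
  using q_pow[OF assms, of p n] assms by simp

lemma norm_q: assumes "p > 0" shows "norm (qbase n p) = p"
  unfolding qbase_def using assms by (simp add: norm_mult)



lemma ang_le: assumes "(n::real) > 0" shows "(2*pi*a/n \<le> pi*c) = (2*a \<le> c*n)"
proof -
  have "(2*pi*a/n \<le> pi*c) = (pi*(2*a) \<le> pi*(c*n))" using assms by (simp add: pos_divide_le_eq algebra_simps)
  also have "\<dots> = (2*a \<le> c*n)" by simp
  finally show ?thesis .
qed
lemma ang_less: "(n::real) > 0 \<Longrightarrow> (pi*c < 2*pi*a/n) = (c*n < 2*a)"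
  using ang_le[of n a c] by linarith


lemma sign_arc:
  fixes u :: complex
  assumes n1: "n \<ge> 1"
  shows "\<exists>k0::int. \<exists>L::int. (L = \<lfloor>real n/2\<rfloor> \<or> L = \<lceil>real n/2\<rceil>) \<and>
    (\<forall>k<n. ((int k - k0) mod int n \<le> L - 1 \<longrightarrow> 0 \<le> u \<bullet> cis (2*pi*real k/real n)) \<and>
           (\<not> (int k - k0) mod int n \<le> L - 1 \<longrightarrow> u \<bullet> cis (2*pi*real k/real n) \<le> 0))"
proof -
  define r where "r = cmod u"
  define \<phi> where "\<phi> = Arg u"
  have r0: "r \<ge> 0" unfolding r_def by simp
  have ure: "Re u = r * cos \<phi>" and uim: "Im u = r * sin \<phi>"
    using rcis_cmod_Arg[of u] unfolding r_def \<phi>_def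
    by (metis Re_rcis, metis Im_rcis)
  have inn: "u \<bullet> cis a = r * cos (a - \<phi>)" for a
    unfolding inner_complex_def ure uim cos_diff by (simp add: algebra_simps)
  have npos: "real n > 0" using n1 by simp
  define y where "y = real n * (\<phi> - pi/2) / (2*pi)"
  define k0 where "k0 = \<lfloor>y\<rfloor> + 1"
  define t where "t = real_of_int k0 - y"
  have t0: "t > 0" and t1: "t \<le> 1" unfolding t_def k0_def by linarith+
  define L where "L = \<lfloor>real n/2 - t\<rfloor> + 1"
  have fl: "\<lfloor>real n/2\<rfloor> \<le> \<lceil>real n/2\<rceil>" "\<lceil>real n/2\<rceil> \<le> \<lfloor>real n/2\<rfloor> + 1"
    by (simp add: floor_le_ceiling) (metis ceiling_le_iff of_int_1 of_int_add real_of_int_floor_add_one_ge)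
  have "\<lfloor>real n/2\<rfloor> - 1 \<le> \<lfloor>real n/2 - t\<rfloor>" using t1 by linarith
  moreover have "\<lfloor>real n/2 - t\<rfloor> \<le> \<lceil>real n/2\<rceil> - 1" using t0
    by (smt (verit, ccfv_threshold) floor_less_iff le_of_int_ceiling of_int_1 of_int_diff)
  ultimately have Lc: "L = \<lfloor>real n/2\<rfloor> \<or> L = \<lceil>real n/2\<rceil>" using fl unfolding L_def by linarith
  have key: "u \<bullet> cis (2*pi*real k/real n) = r * sin (2*pi*(t + real_of_int ((int k - k0) mod int n))/real n)" for k
  proof -
    define j where "j = (int k - k0) mod int n"
    define m where "m = (int k - k0) div int n"
    have km: "int k = k0 + j + int n * m" unfolding j_def m_def by simp
    have "2*pi*real k/real n - \<phi> = (2*pi*(t + real_of_int j)/real n - pi/2) + real_of_int m * (2*pi)"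
    proof -
      have e1: "real k = real_of_int k0 + real_of_int j + real n * real_of_int m"
        using arg_cong[OF km, of real_of_int] by simp
      have e2: "\<phi> = 2*pi*(real_of_int k0 - t)/real n + pi/2"
        unfolding t_def y_def using npos by (simp add: field_simps)
      show ?thesis unfolding e1 e2 using npos by (simp add: field_simps)
    qed
    then have "cos (2*pi*real k/real n - \<phi>) = cos (2*pi*(t + real_of_int j)/real n - pi/2)"
      using cos.plus_of_int[of "2*pi*(t + real_of_int j)/real n - pi/2" m] by simp
    also have "\<dots> = sin (2*pi*(t + real_of_int j)/real n)" by (simp add: cos_diff)
    finally show ?thesis unfolding inn j_def by simp
  qed
  show ?thesis
  proof (intro exI conjI allI impI)
    show "L = \<lfloor>real n/2\<rfloor> \<or> L = \<lceil>real n/2\<rceil>" by (rule Lc)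
  next
    fix k assume "k < n" and jL: "(int k - k0) mod int n \<le> L - 1"
    define j where "j = (int k - k0) mod int n"
    have j0: "j \<ge> 0" unfolding j_def using n1 by simp
    have "j \<le> \<lfloor>real n/2 - t\<rfloor>" using jL unfolding j_def L_def by simp
    then have "real_of_int j \<le> real n/2 - t" by (simp add: le_floor_iff)
    then have "2*pi*(t + real_of_int j)/real n \<le> pi*1" by (subst ang_le[OF npos]) (simp add: field_simps)
    moreover have "0 \<le> 2*pi*(t + real_of_int j)/real n" using t0 j0 npos by simp
    ultimately have "0 \<le> sin (2*pi*(t + real_of_int j)/real n)" by (intro sin_ge_zero) auto
    then show "0 \<le> u \<bullet> cis (2*pi*real k/real n)" unfolding key j_def[symmetric] using r0 by simp
  next
    fix k assume "k < n" and jL: "\<not> (int k - k0) mod int n \<le> L - 1"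
    define j where "j = (int k - k0) mod int n"
    have j1: "j \<le> int n - 1" unfolding j_def using n1 by simp
    have "\<not> j \<le> \<lfloor>real n/2 - t\<rfloor>" using jL unfolding j_def L_def by simp
    then have "real_of_int j > real n/2 - t" by (simp add: le_floor_iff)
    then have a: "2*pi*(t + real_of_int j)/real n > pi*1" by (subst ang_less[OF npos]) (simp add: field_simps)
    have "real_of_int j \<le> real n - 1" using j1 by linarith
    then have "t + real_of_int j \<le> real n" using t1 by linarith
    then have b: "2*pi*(t + real_of_int j)/real n \<le> pi*2" by (subst ang_le[OF npos]) (simp add: field_simps)
    have "sin (2*pi*(t + real_of_int j)/real n) \<le> 0"
    proof (cases "2*pi*(t + real_of_int j)/real n = 2*pi")
      case True then show ?thesis by simp
    next
      case False then show ?thesis using a b by (intro sin_le_zero) auto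
    qed
    then show "u \<bullet> cis (2*pi*real k/real n) \<le> 0" unfolding key j_def[symmetric] using r0
      by (simp add: mult_nonneg_nonpos)
  qed
qed




lemma even_fl_ceil: "even n \<Longrightarrow> \<lfloor>real n/2\<rfloor> = \<lceil>real n/2\<rceil>"
proof -
  assume "even n"
  then obtain m where "n = 2*m" by auto
  then have "real n/2 = of_int (int m)" by simp
  then show ?thesis by (simp only: floor_of_int ceiling_of_int)
qed

lemma core:
  assumes n1: "n \<ge> 1" and p0: "p > 0"
  shows "\<exists>h\<in>{1..n}. \<exists>m'. (m' = 2*h \<or> m' = 2*h-1) \<and> (even n \<longrightarrow> m' = 2*h) \<and>
          (\<Sum>k<n. max 0 (u \<bullet> qbase n p ^ k)) = u \<bullet> vv n p m'"
proof -
  from sign_arc[OF n1, of u] obtain k0 L where Lc: "L = \<lfloor>real n/2\<rfloor> \<or> L = \<lceil>real n/2\<rceil>" and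
    sg0: "\<forall>k<n. ((int k - k0) mod int n \<le> L - 1 \<longrightarrow> 0 \<le> u \<bullet> cis (2*pi*real k/real n)) \<and>
           (\<not> (int k - k0) mod int n \<le> L - 1 \<longrightarrow> u \<bullet> cis (2*pi*real k/real n) \<le> 0)"
    by blast
  note sg = sg0[rule_format]
  define h where "h = nat (k0 mod int n) + 1"
  have "k0 mod int n < int n" "0 \<le> k0 mod int n" using n1 by simp_all
  then have "nat (k0 mod int n) < n" by (simp add: nat_less_iff)
  then have h1: "h \<in> {1..n}" unfolding h_def by simp
  have hm: "(int k - int h + 1) mod int n = (int k - k0) mod int n" for k
  proof -
    have "int h = k0 mod int n + 1" unfolding h_def using n1 by simp
    then have e: "int k - int h + 1 = int k - k0 mod int n" by simp
    show ?thesis unfolding e by (rule mod_diff_right_eq)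
  qed
  define K where "K = {k\<in>{0..<n}. (int k - k0) mod int n \<le> L - 1}"
  define m' where "m' = (if L = \<lceil>real n/2\<rceil> then 2*h else 2*h-1)"
  have vvK: "vv n p m' = (\<Sum>k\<in>K. qbase n p ^ k)"
  proof (cases "L = \<lceil>real n/2\<rceil>")
    case True
    then have "Kup n h = K" unfolding Kup_def K_def hm by simp
    then show ?thesis unfolding vv_def m'_def using True by simp
  next
    case False
    then have L: "L = \<lfloor>real n/2\<rfloor>" using Lc by simp
    have "Klow n h = K" unfolding Klow_def K_def hm L by simp
    moreover have "odd (2*h-1)" "(2*h-1+1) div 2 = h" using h1 by auto
    ultimately show ?thesis unfolding vv_def m'_def using False by simp
  qed
  have qk: "u \<bullet> qbase n p ^ k = p^k * (u \<bullet> cis (2*pi*real k/real n))" for k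
    unfolding q_pow[OF n1] scaleR_conv_of_real[symmetric] inner_scaleR_right ..
  have "(\<Sum>k<n. max 0 (u \<bullet> qbase n p ^ k)) = (\<Sum>k<n. if k \<in> K then u \<bullet> qbase n p ^ k else 0)"
  proof (rule sum.cong[OF refl])
    fix k assume "k \<in> {..<n}"
    then have kn: "k < n" by simp
    have pk: "p^k > 0" using p0 by simp
    show "max 0 (u \<bullet> qbase n p ^ k) = (if k \<in> K then u \<bullet> qbase n p ^ k else 0)"
    proof (cases "k \<in> K")
      case True
      then have "0 \<le> u \<bullet> cis (2*pi*real k/real n)" using sg[OF kn] unfolding K_def by simp
      then show ?thesis using True pk unfolding qk by simp
    next
      case False
      then have "u \<bullet> cis (2*pi*real k/real n) \<le> 0" using sg[OF kn] kn unfolding K_def by simp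
      then show ?thesis using False pk unfolding qk by (simp add: mult_nonneg_nonpos)
    qed
  qed
  also have "\<dots> = (\<Sum>k\<in>{..<n} \<inter> K. u \<bullet> qbase n p ^ k)" by (simp add: sum.inter_restrict)
  also have "{..<n} \<inter> K = K" unfolding K_def by auto
  also have "(\<Sum>k\<in>K. u \<bullet> qbase n p ^ k) = u \<bullet> vv n p m'" unfolding vvK by (simp add: inner_sum_right)
  finally have eq: "(\<Sum>k<n. max 0 (u \<bullet> qbase n p ^ k)) = u \<bullet> vv n p m'" .
  show ?thesis
  proof (intro bexI exI conjI impI)
    show "m' = 2*h \<or> m' = 2*h-1" unfolding m'_def by simp
    show "even n \<Longrightarrow> m' = 2*h" unfolding m'_def using Lc even_fl_ceil by auto
  qed (rule eq, rule h1)
qed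




lemma summ_geom:
  fixes s :: "nat \<Rightarrow> 'a::banach"
  assumes p: "p > (1::real)" and b: "\<And>i. norm (s i) \<le> C * (1/p)^i"
  shows "summable s"
proof (rule summable_comparison_test'[where N=0])
  have "norm (1/p) < 1" using p by simp
  then have "summable (\<lambda>i. (1/p)^i)" by (rule summable_geometric)
  then show "summable (\<lambda>i. C * (1/p)^i)" by (rule summable_mult)
qed (rule b)

lemma q_nz: "p > 0 \<Longrightarrow> qbase n p \<noteq> 0"
  using norm_q[of p n] by auto

lemma norm_invq: assumes "p > 0" shows "norm (inverse (qbase n p ^ i)) = (1/p)^i"
proof -
  have "norm (inverse (qbase n p ^ i)) = inverse (norm (qbase n p) ^ i)" by (simp add: norm_inverse norm_power)
  then show ?thesis using norm_q[OF assms, of n] by (simp add: power_one_over inverse_eq_divide)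
qed

lemma invq_bound: assumes "p > 1" shows "norm (inverse (qbase n p ^ Suc i)) \<le> (1/p)^i"
proof -
  have "(1/p)^(Suc i) \<le> (1/p)^i" using assms by (intro power_decreasing) auto
  then show ?thesis using norm_invq[of p n "Suc i"] assms by simp
qed

lemma invq_shift: assumes n1: "n \<ge> 1" and p: "p > 0"
  shows "inverse (qbase n p ^ Suc (i + n)) = inverse (qbase n p ^ Suc i) / complex_of_real (p^n)"
proof -
  have "qbase n p ^ Suc (i + n) = qbase n p ^ (Suc i + n)" by simp
  also have "\<dots> = qbase n p ^ Suc i * qbase n p ^ n" by (rule power_add)
  finally have e: "qbase n p ^ Suc (i + n) = qbase n p ^ Suc i * complex_of_real (p^n)"
    unfolding q_pow_n[OF n1, of p] .
  show ?thesis unfolding e inverse_mult_distrib divide_inverse ..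
qed

lemma invq_top: assumes n1: "n \<ge> 1" and p: "p > 0" and i: "i < n"
  shows "complex_of_real (p^n) * inverse (qbase n p ^ Suc i) = qbase n p ^ (n - Suc i)"
proof -
  have "qbase n p ^ n = qbase n p ^ ((n - Suc i) + Suc i)" using i by simp
  also have "\<dots> = qbase n p ^ (n - Suc i) * qbase n p ^ Suc i" by (rule power_add)
  finally have "qbase n p ^ n = qbase n p ^ (n - Suc i) * qbase n p ^ Suc i" .
  then have "complex_of_real (p^n) = qbase n p ^ (n - Suc i) * qbase n p ^ Suc i"
    using q_pow_n[OF n1, of p] by simp
  then show ?thesis using q_nz[OF p, of n] by (simp add: field_simps)
qed

lemma sum_hom:
  fixes g w :: "nat \<Rightarrow> real" and \<phi> :: "real \<Rightarrow> real"
  assumes s: "summable (\<lambda>i. \<phi> (g i))" and sh: "\<And>i. g (i+n) = g i / P"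
    and h1: "\<And>t. \<phi> (t/P) = \<phi> t / P" and h2: "\<And>t. \<phi> (P*t) = P * \<phi> t" and P: "P > 1"
    and top: "\<And>i. i<n \<Longrightarrow> P * g i = w (n - Suc i)"
  shows "(\<Sum>i. \<phi> (g i)) = 1/(P-1) * (\<Sum>k<n. \<phi> (w k))"
proof -
  have A: "(\<Sum>i. \<phi> (g i)) = P/(P-1) * (\<Sum>i<n. \<phi> (g i))"
    by (rule split_sum[OF s]) (use sh h1 P in auto)
  have "(\<Sum>k<n. \<phi> (w k)) = (\<Sum>i<n. \<phi> (w (n - Suc i)))" by (rule sum.nat_diff_reindex[symmetric])
  also have "\<dots> = (\<Sum>i<n. P * \<phi> (g i))" by (rule sum.cong[OF refl]) (simp add: top[symmetric] h2)
  also have "\<dots> = P * (\<Sum>i<n. \<phi> (g i))" by (simp add: sum_distrib_left)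
  finally show ?thesis unfolding A using P by simp
qed




lemma max_div: "(P::real) > 0 \<Longrightarrow> max 0 (t/P) = max 0 t / P"
  by (cases "t \<ge> 0") (auto simp: max_def zero_le_divide_iff)

lemma max_mul: "(P::real) > 0 \<Longrightarrow> max 0 (P*t) = P * max 0 t"
  by (cases "t \<ge> 0") (auto simp: max_def zero_le_mult_iff)

lemma inner_div_real: "u \<bullet> (w / complex_of_real P) = (u \<bullet> w) / P"
  by (simp add: inner_complex_def add_divide_distrib)

lemma inner_mul_real: "u \<bullet> (complex_of_real P * w) = P * (u \<bullet> w)"
  by (simp add: inner_complex_def algebra_simps)

lemma lam_upper:
  assumes n1: "n \<ge> 1" and p1: "p > 1" and fA: "finite A" and nA: "A \<noteq> {}"
    and x: "\<forall>j\<ge>1. x j \<in> A"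
  shows "u \<bullet> (\<Sum>j. complex_of_real (x (Suc j)) / qbase n p ^ Suc j) \<le>
     Min A * (1/(p^n-1)) * (\<Sum>k<n. u \<bullet> qbase n p ^ k)
     + (Max A - Min A) * (1/(p^n-1)) * (\<Sum>k<n. max 0 (u \<bullet> qbase n p ^ k))"
proof -
  define q where "q = qbase n p"
  define m where "m = Min A"
  define M where "M = Max A"
  define P where "P = p^n"
  have p0: "p > 0" using p1 by simp
  have P1: "P > 1" unfolding P_def using p1 n1 by (simp add: one_less_power)
  define g where "g i = u \<bullet> inverse (q ^ Suc i)" for i
  have xb: "m \<le> x (Suc i) \<and> x (Suc i) \<le> M" for i
    using x fA unfolding m_def M_def by (simp add: Min_le Max_ge)
  have gb: "norm (g i) \<le> norm u * (1/p)^i" for i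
  proof -
    have "norm (g i) \<le> norm u * norm (inverse (q ^ Suc i))" unfolding g_def real_norm_def
      by (rule Cauchy_Schwarz_ineq2)
    also have "\<dots> \<le> norm u * (1/p)^i" unfolding q_def
      by (rule mult_left_mono[OF invq_bound[OF p1]]) simp
    finally show ?thesis .
  qed
  define B where "B = \<bar>m\<bar> + \<bar>M\<bar>"
  have xB: "\<bar>x (Suc i)\<bar> \<le> B" for i using xb[of i] unfolding B_def by linarith
  have B0: "B \<ge> 0" unfolding B_def by simp
  define f where "f i = complex_of_real (x (Suc i)) / q ^ Suc i" for i
  have fs: "summable f"
  proof (rule summ_geom[OF p1])
    fix i
    have "norm (f i) = \<bar>x (Suc i)\<bar> * norm (inverse (q ^ Suc i))" unfolding f_def divide_inverse norm_mult norm_of_real ..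
    also have "\<dots> \<le> B * (1/p)^i" unfolding q_def
      by (rule mult_mono[OF xB invq_bound[OF p1]]) (use B0 in auto)
    finally show "norm (f i) \<le> B * (1/p)^i" .
  qed
  have uf: "u \<bullet> f i = x (Suc i) * g i" for i
  proof -
    have "f i = x (Suc i) *\<^sub>R inverse (q ^ Suc i)" unfolding f_def
      by (simp add: scaleR_conv_of_real divide_inverse)
    then show ?thesis unfolding g_def by simp
  qed
  have L1: "u \<bullet> suminf f = (\<Sum>i. x (Suc i) * g i)"
    using bounded_linear.suminf[OF bounded_linear_inner_right fs, of u] uf by simp
  have s1: "summable (\<lambda>i. x (Suc i) * g i)"
  proof (rule summ_geom[OF p1])
    fix i
    have "norm (x (Suc i) * g i) \<le> B * (norm u * (1/p)^i)" unfolding norm_mult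
      by (rule mult_mono[OF _ gb]) (use xB B0 in auto)
    then show "norm (x (Suc i) * g i) \<le> (B * norm u) * (1/p)^i" by (simp add: mult.assoc)
  qed
  have sg: "summable g" by (rule summ_geom[OF p1 gb])
  have smg: "summable (\<lambda>i. max 0 (g i))"
    by (rule summ_geom[OF p1, of _ "norm u"]) (use gb p0 in \<open>auto simp: abs_le_iff\<close>)
  have s2: "summable (\<lambda>i. m * g i + (M - m) * max 0 (g i))"
    using summable_add[OF summable_mult[OF sg, of m] summable_mult[OF smg, of "M-m"]] .
  have pw: "x (Suc i) * g i \<le> m * g i + (M - m) * max 0 (g i)" for i
  proof (cases "g i \<ge> 0")
    case True
    then have "x (Suc i) * g i \<le> M * g i" using xb[of i] by (simp add: mult_right_mono)
    then show ?thesis using True by (simp add: algebra_simps)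
  next
    case False
    then have "x (Suc i) * g i \<le> m * g i" using xb[of i] by (simp add: mult_right_mono_neg)
    then show ?thesis using False by simp
  qed
  have "(\<Sum>i. x (Suc i) * g i) \<le> (\<Sum>i. m * g i + (M - m) * max 0 (g i))"
    by (rule suminf_le[OF pw s1 s2])
  also have "\<dots> = m * (\<Sum>i. g i) + (M - m) * (\<Sum>i. max 0 (g i))"
    using suminf_add[OF summable_mult[OF sg, of m] summable_mult[OF smg, of "M-m"]]
      suminf_mult[OF sg, of m] suminf_mult[OF smg, of "M-m"] by simp
  also have "(\<Sum>i. g i) = 1/(P-1) * (\<Sum>k<n. u \<bullet> q ^ k)"
  proof (rule sum_hom[where \<phi>="\<lambda>t. t", OF sg _ _ _ P1])
    fix i show "g (i + n) = g i / P" unfolding g_def q_def P_def invq_shift[OF n1 p0]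
inner_div_real ..
  next
    fix i assume "i < n"
    show "P * g i = u \<bullet> q ^ (n - Suc i)" unfolding g_def q_def P_def invq_top[OF n1 p0 \<open>i<n\<close>, symmetric] inner_mul_real ..
  qed auto
  also have "(\<Sum>i. max 0 (g i)) = 1/(P-1) * (\<Sum>k<n. max 0 (u \<bullet> q ^ k))"
  proof (rule sum_hom[where \<phi>="\<lambda>t. max 0 t", OF smg _ _ _ P1])
    fix i show "g (i + n) = g i / P" unfolding g_def q_def P_def invq_shift[OF n1 p0]
inner_div_real ..
  next
    fix i assume "i < n"
    show "P * g i = u \<bullet> q ^ (n - Suc i)" unfolding g_def q_def P_def invq_top[OF n1 p0 \<open>i<n\<close>, symmetric] inner_mul_real ..
  qed (use P1 max_div max_mul in auto)
  finally show ?thesis unfolding L1[symmetric] f_def q_def m_def M_def P_def by simp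
qed




lemma alg_aux: "(c::complex) \<noteq> 0 \<Longrightarrow> (Sm + a*Sk)/c = a/c*Sk + 1/c*Sm"
  by (simp add: field_simps)

lemma lam_lower:
  assumes n1: "n \<ge> 1" and p1: "p > 1" and fA: "finite A" and nA: "A \<noteq> {}" and K: "K \<subseteq> {..<n}"
  shows "complex_of_real ((Max A - Min A) / (p ^ n - 1)) * (\<Sum>k\<in>K. qbase n p ^ k)
                + complex_of_real (1 / (p ^ n - 1)) * (\<Sum>k<n. complex_of_real (Min A) * (qbase n p) ^ k)
         \<in> Lam n p A"
proof -
  define q where "q = qbase n p"
  define m where "m = Min A"
  define M where "M = Max A"
  define P where "P = p^n"
  have p0: "p > 0" using p1 by simp
  have P1: "P > 1" unfolding P_def using p1 n1 by (simp add: one_less_power)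
  define D where "D k = (if k \<in> K then M else m)" for k
  define x where "x j = D (n - Suc ((j - 1) mod n))" for j
  have xA: "\<forall>j\<ge>1. x j \<in> A" unfolding x_def D_def m_def M_def using fA nA by auto
  define s where "s i = complex_of_real (x (Suc i)) * inverse (q ^ Suc i)" for i
  define B where "B = \<bar>m\<bar> + \<bar>M\<bar>"
  have xB: "\<bar>x i\<bar> \<le> B" for i unfolding x_def D_def B_def by auto
  have B0: "B \<ge> 0" unfolding B_def by simp
  have ss: "summable s"
  proof (rule summ_geom[OF p1])
    fix i
    have "norm (s i) = \<bar>x (Suc i)\<bar> * norm (inverse (q ^ Suc i))" unfolding s_def norm_mult norm_of_real ..
    also have "\<dots> \<le> B * (1/p)^i" unfolding q_def
      by (rule mult_mono[OF xB invq_bound[OF p1]]) (use B0 in auto)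
    finally show "norm (s i) \<le> B * (1/p)^i" .
  qed
  have xsh: "x (Suc (i + n)) = x (Suc i)" for i unfolding x_def by simp
  have ssh: "s (i + n) = s i / complex_of_real P" for i
    unfolding s_def xsh q_def P_def invq_shift[OF n1 p0] by simp
  have e1: "(\<Sum>i. s i) = complex_of_real P / (complex_of_real P - 1) * (\<Sum>i<n. s i)"
    by (rule split_sum[OF ss ssh]) (use P1 in auto)
  have "complex_of_real P * (\<Sum>i<n. s i) = (\<Sum>i<n. complex_of_real (D (n - Suc i)) * q ^ (n - Suc i))"
    unfolding sum_distrib_left
  proof (rule sum.cong[OF refl])
    fix i assume "i \<in> {..<n}"
    then have i: "i < n" by simp
    have "x (Suc i) = D (n - Suc i)" unfolding x_def using i by simp
    then show "complex_of_real P * s i = complex_of_real (D (n - Suc i)) * q ^ (n - Suc i)"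
      unfolding s_def q_def P_def invq_top[OF n1 p0 i, symmetric] by (simp add: algebra_simps)
  qed
  also have "\<dots> = (\<Sum>k<n. complex_of_real (D k) * q ^ k)"
    by (rule sum.nat_diff_reindex)
  also have "\<dots> = (\<Sum>k<n. complex_of_real m * q ^ k + (if k \<in> K then complex_of_real (M - m) * q ^ k else 0))"
    by (rule sum.cong[OF refl]) (simp add: D_def algebra_simps)
  also have "\<dots> = (\<Sum>k<n. complex_of_real m * q ^ k) + complex_of_real (M - m) * (\<Sum>k\<in>K. q ^ k)"
  proof -
    have "(\<Sum>k<n. (if k \<in> K then complex_of_real (M - m) * q ^ k else 0)) = (\<Sum>k\<in>{..<n} \<inter> K. complex_of_real (M - m) * q ^ k)"
      by (rule sum.inter_restrict[symmetric]) simp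
    also have "{..<n} \<inter> K = K" using K by auto
    finally show ?thesis by (simp add: sum.distrib sum_distrib_left)
  qed
  finally have e2: "complex_of_real P * (\<Sum>i<n. s i) = (\<Sum>k<n. complex_of_real m * q ^ k) + complex_of_real (M - m) * (\<Sum>k\<in>K. q ^ k)" .
  have Pn1: "complex_of_real P - 1 \<noteq> 0" using P1
    by (metis less_irrefl of_real_1 of_real_eq_iff right_minus_eq)
  have "(\<Sum>i. s i) = (complex_of_real P * (\<Sum>i<n. s i)) / (complex_of_real P - 1)" unfolding e1 by simp
  also have "\<dots> = complex_of_real ((M - m) / (P - 1)) * (\<Sum>k\<in>K. q ^ k)
       + complex_of_real (1 / (P - 1)) * (\<Sum>k<n. complex_of_real m * q ^ k)"
  proof -
    have r1: "complex_of_real ((M-m)/(P-1)) = complex_of_real (M-m) / (complex_of_real P - 1)" by simp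
    have r2: "complex_of_real (1/(P-1)) = 1 / (complex_of_real P - 1)" by simp
    show ?thesis unfolding e2 r1 r2 by (rule alg_aux[OF Pn1])
  qed
  finally have z: "(\<Sum>i. s i) = complex_of_real ((M - m) / (P - 1)) * (\<Sum>k\<in>K. q ^ k)
       + complex_of_real (1 / (P - 1)) * (\<Sum>k<n. complex_of_real m * q ^ k)" .
  have "(\<Sum>i. s i) \<in> Lam n p A" unfolding Lam_def
  proof (intro CollectI exI conjI)
    show "(\<Sum>i. s i) = (\<Sum>j. complex_of_real (x (Suc j)) / qbase n p ^ Suc j)"
      unfolding s_def q_def divide_inverse ..
  qed (rule xA)
  then show ?thesis unfolding z q_def m_def M_def P_def .
qed




lemma img_hull:
  fixes cc bb :: complex
  shows "(\<lambda>y. cc * y + bb) ` (convex hull S) = convex hull ((\<lambda>y. cc * y + bb) ` S)"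
proof -
  have e: "(\<lambda>y. cc * y + bb) ` X = (+) bb ` ((\<lambda>y. cc * y) ` X)" for X
    by (auto simp: image_image add.commute)
  have l: "linear (\<lambda>y. cc * y)" by (rule bounded_linear.linear[OF bounded_linear_mult_right])
  show ?thesis unfolding e convex_hull_linear_image[OF l, symmetric] convex_hull_translation ..
qed

lemma upper_set:
  assumes n1: "n \<ge> 1" and p1: "p > 1" and fA: "finite A" and nA: "A \<noteq> {}"
    and fV: "finite V"
    and cov: "\<And>u. \<exists>v\<in>V. (\<Sum>k<n. max 0 (u \<bullet> qbase n p ^ k)) \<le> u \<bullet> v"
  shows "Lam n p A \<subseteq> (\<lambda>y. complex_of_real ((Max A - Min A) / (p ^ n - 1)) * y
                + complex_of_real (1 / (p ^ n - 1)) * (\<Sum>k<n. complex_of_real (Min A) * (qbase n p) ^ k))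
           ` (convex hull V)"
    (is "_ \<subseteq> ?F ` _")
proof
  fix z assume "z \<in> Lam n p A"
  then obtain x where z: "z = (\<Sum>j. complex_of_real (x (Suc j)) / (qbase n p) ^ (Suc j))"
    and x: "\<forall>j\<ge>1. x j \<in> A" unfolding Lam_def by blast
  define S where "S = ?F ` (convex hull V)"
  have S: "S = convex hull (?F ` V)" unfolding S_def by (rule img_hull)
  have cS: "convex S" unfolding S by simp
  have clS: "closed S" unfolding S
    by (rule compact_imp_closed, rule compact_convex_hull, rule finite_imp_compact) (use fV in simp)
  show "z \<in> S"
  proof (rule ccontr)
    assume "z \<notin> S"
    from separating_hyperplane_closed_point[OF cS clS this] obtain a b where
      ab: "a \<bullet> z < b" "\<forall>x\<in>S. b < a \<bullet> x" by blast
    define u where "u = - a"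
    obtain v where v: "v \<in> V" and vb: "(\<Sum>k<n. max 0 (u \<bullet> qbase n p ^ k)) \<le> u \<bullet> v"
      using cov by blast
    have P1: "p^n > 1" using p1 n1 by (simp add: one_less_power)
    have c0: "(Max A - Min A) * (1/(p^n-1)) \<ge> 0" using P1 fA nA by simp
    have "u \<bullet> z \<le> Min A * (1/(p^n-1)) * (\<Sum>k<n. u \<bullet> qbase n p ^ k)
      + (Max A - Min A) * (1/(p^n-1)) * (\<Sum>k<n. max 0 (u \<bullet> qbase n p ^ k))"
      unfolding z by (rule lam_upper[OF n1 p1 fA nA x])
    also have "\<dots> \<le> Min A * (1/(p^n-1)) * (\<Sum>k<n. u \<bullet> qbase n p ^ k)
      + (Max A - Min A) * (1/(p^n-1)) * (u \<bullet> v)"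
      using mult_left_mono[OF vb c0] by simp
    also have "\<dots> = u \<bullet> ?F v"
      unfolding inner_add_right inner_mul_real inner_sum_right sum_distrib_left[symmetric]
      by (simp add: algebra_simps)
    finally have "u \<bullet> z \<le> u \<bullet> ?F v" .
    moreover have "?F v \<in> S" unfolding S_def using v hull_subset[of V convex] by blast
    ultimately show False using ab unfolding u_def by force
  qed
qed


lemma lower_set:
  assumes n1: "n \<ge> 1" and p1: "p > 1" and fA: "finite A" and nA: "A \<noteq> {}"
    and sub: "\<And>v. v \<in> V \<Longrightarrow> \<exists>K\<subseteq>{..<n}. v = (\<Sum>k\<in>K. qbase n p ^ k)"
  shows "(\<lambda>y. complex_of_real ((Max A - Min A) / (p ^ n - 1)) * y
                + complex_of_real (1 / (p ^ n - 1)) * (\<Sum>k<n. complex_of_real (Min A) * (qbase n p) ^ k))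
           ` (convex hull V) \<subseteq> convex hull (Lam n p A)"
    (is "?F ` _ \<subseteq> _")
proof -
  have "?F ` V \<subseteq> Lam n p A"
  proof
    fix w assume "w \<in> ?F ` V"
    then obtain v where v: "v \<in> V" "w = ?F v" by blast
    obtain K where K: "K \<subseteq> {..<n}" "v = (\<Sum>k\<in>K. qbase n p ^ k)" using sub[OF v(1)] by blast
    show "w \<in> Lam n p A" unfolding v(2) K(2) by (rule lam_lower[OF n1 p1 fA nA K(1)])
  qed
  then have "convex hull (?F ` V) \<subseteq> convex hull (Lam n p A)" by (rule hull_mono)
  then show ?thesis unfolding img_hull .
qed

lemma vv_sub: "\<exists>K\<subseteq>{..<n}. vv n p m = (\<Sum>k\<in>K. qbase n p ^ k)"
  unfolding vv_def by (rule exI[where x="if odd m then Klow n ((m + 1) div 2) else Kup n (m div 2)"])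
    (auto simp: Klow_def Kup_def)

theorem theorem3p15:
  fixes n :: nat and p :: real and A :: "real set"
  assumes "n \<ge> 1" and "p > 1" and "finite A" and "A \<noteq> {}"
  shows "convex hull (Lam n p A) =
           (\<lambda>y. complex_of_real ((Max A - Min A) / (p ^ n - 1)) * y
                + complex_of_real (1 / (p ^ n - 1)) * (\<Sum>k<n. complex_of_real (Min A) * (qbase n p) ^ k))
           ` (convex hull (vv n p ` {1..2*n}))
       \<and> (even n \<longrightarrow> convex hull (Lam n p A) =
           (\<lambda>y. complex_of_real ((Max A - Min A) / (p ^ n - 1)) * y
                + complex_of_real (1 / (p ^ n - 1)) * (\<Sum>k<n. complex_of_real (Min A) * (qbase n p) ^ k))
           ` (convex hull ((\<lambda>h. vv n p (2*h)) ` {1..n})))"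
    (is "?A \<and> (_ \<longrightarrow> ?B)")
proof -
  note as = assms(1,2,3,4)
  let ?F = "(\<lambda>y. complex_of_real ((Max A - Min A) / (p ^ n - 1)) * y
                + complex_of_real (1 / (p ^ n - 1)) * (\<Sum>k<n. complex_of_real (Min A) * (qbase n p) ^ k))"
  have p0: "p > 0" using assms(2) by simp
  have cvx: "convex (?F ` (convex hull W))" for W
    unfolding img_hull by simp
  have eq: "convex hull (Lam n p A) = ?F ` (convex hull W)"
    if fW: "finite W" and cov: "\<And>u. \<exists>v\<in>W. (\<Sum>k<n. max 0 (u \<bullet> qbase n p ^ k)) \<le> u \<bullet> v"
      and sub: "\<And>v. v \<in> W \<Longrightarrow> \<exists>K\<subseteq>{..<n}. v = (\<Sum>k\<in>K. qbase n p ^ k)" for W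
  proof
    show "convex hull (Lam n p A) \<subseteq> ?F ` (convex hull W)"
      by (rule hull_minimal[where S=convex, OF upper_set[OF as fW cov] cvx[of W]])
    show "?F ` (convex hull W) \<subseteq> convex hull (Lam n p A)" by (rule lower_set[OF as sub])
  qed
  have A: ?A
  proof (rule eq)
    fix u
    obtain h m' where h: "h \<in> {1..n}" and m': "m' = 2*h \<or> m' = 2*h-1"
      and e: "(\<Sum>k<n. max 0 (u \<bullet> qbase n p ^ k)) = u \<bullet> vv n p m'"
      using core[OF assms(1) p0, of u] by blast
    have "m' \<in> {1..2*n}" using h m' by auto
    then show "\<exists>v\<in>vv n p ` {1..2*n}. (\<Sum>k<n. max 0 (u \<bullet> qbase n p ^ k)) \<le> u \<bullet> v"
      using e by force
  qed (use vv_sub in auto)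
  have B: ?B if ev: "even n"
  proof (rule eq)
    fix u
    obtain h m' where h: "h \<in> {1..n}" and m': "even n \<longrightarrow> m' = 2*h"
      and e: "(\<Sum>k<n. max 0 (u \<bullet> qbase n p ^ k)) = u \<bullet> vv n p m'"
      using core[OF assms(1) p0, of u] by blast
    then show "\<exists>v\<in>(\<lambda>h. vv n p (2*h)) ` {1..n}. (\<Sum>k<n. max 0 (u \<bullet> qbase n p ^ k)) \<le> u \<bullet> v"
      using ev by force
  qed (use vv_sub in auto)
  show ?thesis using A B by blast
qed


end
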